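(* Let $F^\pm\in\mathcal E(\lambda,\Lambda)$, let $f^\pm$ be uniformly continuous on $B_1^\pm$ and $g$ uniformly continuous on $T$. Let $u$ be a bounded viscosity subsolution of the flat problem (FP). Fix $0<\rho<1$. Then for every sufficiently small $\varepsilon>0$, the upper $\varepsilon$-envelope $u^\varepsilon$ is a viscosity subsolution of $$F^\pm(D^2u^\varepsilon)=f^\pm_\varepsilon\ \text{in }B_r^\pm,\qquad (u^\varepsilon)^+_{x_n}-(u^\varepsilon)^-_{x_n}=g_\varepsilon\ \text{on }T_r=B_r\cap\{x_n=0\},$$ for any $r\le\rho-r_\varepsilon$, where $r_\varepsilon=(2\varepsilon\|u\|_{L^\infty(B_1)})^{1/2}$, $f^\pm_\varepsilon=f^\pm-\omega_{f^\pm}(r_\varepsilon)$ and $g_\varepsilon=g-\omega_g(r_\varepsilon)$.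
   Context: $\mathcal E(\lambda,\Lambda)$: $F:\mathcal S^n\to\mathbb R$ with $F(0)=0$ and $\lambda\|N\|\le F(M+N)-F(M)\le\Lambda\|N\|$ for $N\ge0$. Flat setting: $B_r^\pm=B_r\cap\{\pm x_n>0\}$, $T=B_1\cap\{x_n=0\}$; (FP): $F^\pm(D^2u)=f^\pm$ in $B_1^\pm$, $u^+_{x_n}-u^-_{x_n}=g$ on $T$. Viscosity subsolution of (FP): $u$ USC such that for $\varphi$ touching $u$ from above at $x_0$: if $x_0\in B_1^\pm$ and $\varphi$ is $C^2$ near $x_0$ then $F^\pm(D^2\varphi(x_0))\ge f^\pm(x_0)$; if $x_0\in T$ and $\varphi$ is continuous with restrictions $\varphi^\pm$ to $\overline{B_\delta(x_0)\cap\{\pm x_n>0\}}$ of class $C^2$, then $\varphi^+_{x_n}(x_0)-\varphi^-_{x_n}(x_0)\ge g(x_0)$ (the same notion on $B_r$, $T_r$ with $f_\varepsilon^\pm,g_\varepsilon$). Upper $\varepsilon$-envelope in the $x'$-direction: for $y=(y',y_n)\in\overline{B_\rho}$, $u^\varepsilon(y',y_n)=\sup\{u(x',y_n)-\frac1\varepsilon|x'-y'|^2:(x',y_n)\in\overline{B_\rho}\}$. Modulus of continuity: $\omega_h(r)=\sup_{|x-y|\le r}|h(x)-h(y)|$. *)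

theory Defs
  imports "HOL-Analysis.Analysis"
begin

text \<open>Points of R^n are vectors real^'n; the distinguished coordinate k plays the
role of x_n (the normal direction of the flat interface).\<close>

definition sym_mat :: "real^'n^'n \<Rightarrow> bool" where
  "sym_mat M \<longleftrightarrow> transpose M = M"

definition psd_mat :: "real^'n^'n \<Rightarrow> bool" where
  "psd_mat N \<longleftrightarrow> sym_mat N \<and> (\<forall>x. 0 \<le> x \<bullet> (N *v x))"

definition mat_norm :: "real^'n^'n \<Rightarrow> real" where
  "mat_norm N = onorm (\<lambda>x. N *v x)"

definition ellip_class :: "real \<Rightarrow> real \<Rightarrow> (real^'n^'n \<Rightarrow> real) \<Rightarrow> bool" where
  "ellip_class lam Lam F \<longleftrightarrow> 0 < lam \<and> lam \<le> Lam \<and> F 0 = 0 \<and>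
     (\<forall>M N. sym_mat M \<and> psd_mat N \<longrightarrow>
        lam * mat_norm N \<le> F (M + N) - F M \<and> F (M + N) - F M \<le> Lam * mat_norm N)"

definition pderiv :: "'n \<Rightarrow> (real^'n \<Rightarrow> real) \<Rightarrow> real^'n \<Rightarrow> real" where
  "pderiv i f x = frechet_derivative f (at x) (axis i 1)"

definition grad :: "(real^'n \<Rightarrow> real) \<Rightarrow> real^'n \<Rightarrow> real^'n" where
  "grad f x = (\<chi> j. pderiv j f x)"

definition hess :: "(real^'n \<Rightarrow> real) \<Rightarrow> real^'n \<Rightarrow> real^'n^'n" where
  "hess f x = (\<chi> i j. pderiv i (\<lambda>y. grad f y $ j) x)"

definition C2_on :: "(real^'n) set \<Rightarrow> (real^'n \<Rightarrow> real) \<Rightarrow> bool" where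
  "C2_on S f \<longleftrightarrow> open S \<and> (\<forall>x\<in>S. f differentiable (at x)) \<and>
     (\<forall>x\<in>S. \<forall>j. (\<lambda>y. grad f y $ j) differentiable (at x)) \<and>
     continuous_on S (hess f)"

definition usc_on :: "(real^'n) set \<Rightarrow> (real^'n \<Rightarrow> real) \<Rightarrow> bool" where
  "usc_on S u \<longleftrightarrow> (\<forall>x\<in>S. \<forall>e>0. \<exists>d>0. \<forall>y\<in>S. dist y x < d \<longrightarrow> u y < u x + e)"

definition touches_above :: "(real^'n) set \<Rightarrow> (real^'n \<Rightarrow> real) \<Rightarrow> (real^'n \<Rightarrow> real) \<Rightarrow> real^'n \<Rightarrow> bool" where
  "touches_above S u \<phi> x0 \<longleftrightarrow> \<phi> x0 = u x0 \<and> (\<exists>d>0. \<forall>x\<in>S \<inter> ball x0 d. u x \<le> \<phi> x)"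

text \<open>Viscosity subsolution of the flat problem in B_r:
  F^+(D^2 u) = f^+ in B_r^+, F^-(D^2 u) = f^- in B_r^-, u^+_{x_k} - u^-_{x_k} = g on T_r.
  "phi^+ of class C^2 on the closed half ball" is rendered as: phi agrees there with a
  C^2 function defined on an open neighbourhood of the closed half ball.\<close>
definition visc_sub ::
  "'n \<Rightarrow> real \<Rightarrow> (real^'n^'n \<Rightarrow> real) \<Rightarrow> (real^'n^'n \<Rightarrow> real) \<Rightarrow>
   (real^'n \<Rightarrow> real) \<Rightarrow> (real^'n \<Rightarrow> real) \<Rightarrow> (real^'n \<Rightarrow> real) \<Rightarrow> (real^'n \<Rightarrow> real) \<Rightarrow> bool" where
  "visc_sub k r Fp Fm fp fm g u \<longleftrightarrow>
     usc_on (ball 0 r) u \<and>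
     (\<forall>x0 \<phi>. x0 \<in> ball 0 r \<and> 0 < x0 $ k \<and> touches_above (ball 0 r) u \<phi> x0 \<and>
          (\<exists>d>0. C2_on (ball x0 d) \<phi>) \<longrightarrow> fp x0 \<le> Fp (hess \<phi> x0)) \<and>
     (\<forall>x0 \<phi>. x0 \<in> ball 0 r \<and> x0 $ k < 0 \<and> touches_above (ball 0 r) u \<phi> x0 \<and>
          (\<exists>d>0. C2_on (ball x0 d) \<phi>) \<longrightarrow> fm x0 \<le> Fm (hess \<phi> x0)) \<and>
     (\<forall>x0 \<phi> \<delta> \<psi>p \<psi>m Up Um. x0 \<in> ball 0 r \<and> x0 $ k = 0 \<and> touches_above (ball 0 r) u \<phi> x0 \<and>
          0 < \<delta> \<and> continuous_on (cball x0 \<delta>) \<phi> \<and>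
          closure (ball x0 \<delta> \<inter> {x. 0 < x $ k}) \<subseteq> Up \<and> C2_on Up \<psi>p \<and>
          (\<forall>x\<in>closure (ball x0 \<delta> \<inter> {x. 0 < x $ k}). \<psi>p x = \<phi> x) \<and>
          closure (ball x0 \<delta> \<inter> {x. x $ k < 0}) \<subseteq> Um \<and> C2_on Um \<psi>m \<and>
          (\<forall>x\<in>closure (ball x0 \<delta> \<inter> {x. x $ k < 0}). \<psi>m x = \<phi> x)
        \<longrightarrow> g x0 \<le> pderiv k \<psi>p x0 - pderiv k \<psi>m x0)"

definition modc :: "(real^'n) set \<Rightarrow> (real^'n \<Rightarrow> real) \<Rightarrow> real \<Rightarrow> real" where
  "modc S h r = Sup {\<bar>h x - h y\<bar> | x y. x \<in> S \<and> y \<in> S \<and> dist x y \<le> r}"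

definition upper_env :: "'n \<Rightarrow> real \<Rightarrow> real \<Rightarrow> (real^'n \<Rightarrow> real) \<Rightarrow> real^'n \<Rightarrow> real" where
  "upper_env k \<rho> \<epsilon> u y = Sup {u x - (norm (x - y))\<^sup>2 / \<epsilon> | x. x \<in> cball 0 \<rho> \<and> x $ k = y $ k}"

definition sup_norm_B1 :: "(real^'n \<Rightarrow> real) \<Rightarrow> real" where
  "sup_norm_B1 u = Sup ((\<lambda>x. \<bar>u x\<bar>) ` ball 0 1)"

end

theory Submission
  imports Defs
begin


lemma hd_shift:
  fixes f :: "real^'n \<Rightarrow> real"
  assumes "(f has_derivative D) (at (x - h))"
  shows "((\<lambda>x. f (x - h) + c) has_derivative D) (at x)"
proof -
  have g: "((\<lambda>x. x - h) has_derivative (\<lambda>x. x)) (at x)"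
    by (auto intro!: derivative_eq_intros)
  have "((\<lambda>x. f (x - h)) has_derivative D) (at x)"
    using has_derivative_compose[OF g, of f D] assms by (simp add: o_def)
  then show ?thesis by (rule has_derivative_add_const)
qed

lemma fd_shift:
  fixes f :: "real^'n \<Rightarrow> real"
  shows "frechet_derivative (\<lambda>x. f (x - h) + c) (at x) = frechet_derivative f (at (x - h))"
proof -
  have "\<And>D. ((\<lambda>x. f (x - h) + c) has_derivative D) (at x) \<longleftrightarrow> (f has_derivative D) (at (x - h))"
  proof
    fix D assume "((\<lambda>x. f (x - h) + c) has_derivative D) (at x)"
    then have "((\<lambda>z. (\<lambda>x. f (x - h) + c) (z - (-h)) + (-c)) has_derivative D) (at (x - h))"
      using hd_shift[of "\<lambda>x. f (x - h) + c" D "x - h" "-h" "-c"] by simp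
    moreover have "(\<lambda>z. (\<lambda>x. f (x - h) + c) (z - (-h)) + (-c)) = f" by (rule ext) simp
    ultimately show "(f has_derivative D) (at (x - h))" by simp
  qed (rule hd_shift)
  then show ?thesis unfolding frechet_derivative_def by simp
qed

lemma pderiv_shift: "pderiv i (\<lambda>x. f (x - h) + c) x = pderiv i f (x - h)"
  unfolding pderiv_def by (simp add: fd_shift)

lemma pderiv_shift0: "pderiv i (\<lambda>x. f (x - h)) x = pderiv i f (x - h)"
  using pderiv_shift[of i f h 0 x] by simp

lemma grad_shift: "grad (\<lambda>x. f (x - h) + c) x = grad f (x - h)"
  unfolding grad_def by (simp add: pderiv_shift)

lemma hess_shift: "hess (\<lambda>x. f (x - h) + c) x = hess f (x - h)"
proof -
  have "\<And>j. (\<lambda>y. grad (\<lambda>x. f (x - h) + c) y $ j) = (\<lambda>y. (\<lambda>z. grad f z $ j) (y - h) + 0)"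
    by (simp add: grad_shift)
  then show ?thesis unfolding hess_def 
    using pderiv_shift0[of _ "\<lambda>z. grad f z $ _" h x] by (simp add: vec_eq_iff)
qed

lemma diff_shift:
  fixes f :: "real^'n \<Rightarrow> real"
  assumes "f differentiable (at (x - h))"
  shows "(\<lambda>x. f (x - h) + c) differentiable (at x)"
  using assms hd_shift unfolding differentiable_def by blast

lemma C2_shift:
  fixes f :: "real^'n \<Rightarrow> real"
  assumes "C2_on S f" "open S'" "\<And>x. x \<in> S' \<Longrightarrow> x - h \<in> S"
  shows "C2_on S' (\<lambda>x. f (x - h) + c)"
proof -
  have "continuous_on S' (hess f \<circ> (\<lambda>x. x - h))"
    apply (rule continuous_on_compose)
     apply (auto intro!: continuous_intros)
    using assms unfolding C2_on_def
    by (meson continuous_on_subset image_subset_iff)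
  moreover have "\<And>j y. (\<lambda>x. grad (\<lambda>x. f (x - h) + c) x $ j) = (\<lambda>x. (\<lambda>z. grad f z $ j) (x - h) + 0)"
    by (simp add: grad_shift)
  ultimately show ?thesis using assms unfolding C2_on_def
    using diff_shift[of "\<lambda>z. grad f z $ _" _ h 0]
    by (auto simp: hess_shift o_def intro!: diff_shift)
qed



context
  fixes k :: "'n::finite" and \<rho> \<epsilon> M :: real and u :: "real^'n \<Rightarrow> real"
  assumes usc: "usc_on (ball 0 1) u" and bnd: "\<And>x. x \<in> ball 0 1 \<Longrightarrow> \<bar>u x\<bar> \<le> M"
    and rho: "0 < \<rho>" "\<rho> < 1" and eps: "0 < \<epsilon>"
begin

lemma cb_sub: "x \<in> cball 0 \<rho> \<Longrightarrow> x \<in> ball (0::real^'n) 1"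
  using rho by auto

lemma env_bdd: "bdd_above {u x - (norm (x - y))\<^sup>2 / \<epsilon> | x. x \<in> cball 0 \<rho> \<and> x $ k = y $ k}"
  unfolding bdd_above_def
proof (intro exI[of _ M] ballI)
  fix v assume "v \<in> {u x - (norm (x - y))\<^sup>2 / \<epsilon> | x. x \<in> cball 0 \<rho> \<and> x $ k = y $ k}"
  then obtain x where x: "x \<in> cball 0 \<rho>" "v = u x - (norm (x - y))\<^sup>2 / \<epsilon>" by auto
  have "u x \<le> M" using bnd[OF cb_sub[OF x(1)]] by simp
  moreover have "0 \<le> (norm (x - y))\<^sup>2 / \<epsilon>" using eps by simp
  ultimately show "v \<le> M" using x by simp
qed

lemma env_ge: "x \<in> cball 0 \<rho> \<Longrightarrow> x $ k = y $ k \<Longrightarrow>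
   u x - (norm (x - y))\<^sup>2 / \<epsilon> \<le> upper_env k \<rho> \<epsilon> u y"
  unfolding upper_env_def by (rule cSup_upper[OF _ env_bdd]) auto

lemma env_ne: "y \<in> cball 0 \<rho> \<Longrightarrow> {u x - (norm (x - y))\<^sup>2 / \<epsilon> | x. x \<in> cball 0 \<rho> \<and> x $ k = y $ k} \<noteq> {}"
  by auto

lemma env_approx: assumes "y \<in> cball 0 \<rho>" "0 < e"
  shows "\<exists>x. x \<in> cball 0 \<rho> \<and> x $ k = y $ k \<and> upper_env k \<rho> \<epsilon> u y - e < u x - (norm (x - y))\<^sup>2 / \<epsilon>"
proof -
  have "upper_env k \<rho> \<epsilon> u y - e < upper_env k \<rho> \<epsilon> u y" using assms by simp
  then have "\<exists>v\<in>{u x - (norm (x - y))\<^sup>2 / \<epsilon> | x. x \<in> cball 0 \<rho> \<and> x $ k = y $ k}.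
     upper_env k \<rho> \<epsilon> u y - e < v"
    unfolding upper_env_def using less_cSup_iff[OF env_ne[OF assms(1)] env_bdd] by blast
  then show ?thesis by blast
qed

lemma usc_lim:
  assumes "l \<in> ball 0 1" "\<And>n. X n \<in> ball 0 1" "X \<longlonglongrightarrow> l" "Z \<longlonglongrightarrow> y" "A' \<longlonglongrightarrow> A"
    and "\<And>n. A' n \<le> u (X n) - (norm (X n - Z n))\<^sup>2 / \<epsilon>"
  shows "A \<le> u l - (norm (l - y))\<^sup>2 / \<epsilon>"
proof (rule field_le_epsilon)
  fix e :: real assume e: "0 < e"
  obtain d where d: "d > 0" "\<And>z. z \<in> ball 0 1 \<Longrightarrow> dist z l < d \<Longrightarrow> u z < u l + e"
    using usc assms(1) e unfolding usc_on_def by blast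
  have ev: "eventually (\<lambda>n. dist (X n) l < d) sequentially"
    using assms(3) d(1) by (rule tendstoD)
  have ev2: "eventually (\<lambda>n. A' n \<le> u l + e - (norm (X n - Z n))\<^sup>2 / \<epsilon>) sequentially"
    using ev proof eventually_elim
    case (elim n)
    then show ?case using d(2)[OF assms(2) elim] assms(6)[of n] by linarith
  qed
  have lim: "(\<lambda>n. u l + e - (norm (X n - Z n))\<^sup>2 / \<epsilon>) \<longlonglongrightarrow> u l + e - (norm (l - y))\<^sup>2 / \<epsilon>"
    using assms(3,4) eps by (auto intro!: tendsto_intros)
  have "A \<le> u l + e - (norm (l - y))\<^sup>2 / \<epsilon>"
    by (rule tendsto_le[OF trivial_limit_sequentially lim assms(5) ev2])
  then show "A \<le> u l - (norm (l - y))\<^sup>2 / \<epsilon> + e" by simp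
qed

lemma env_max: assumes "y \<in> cball 0 \<rho>"
  shows "\<exists>x. x \<in> cball 0 \<rho> \<and> x $ k = y $ k \<and> upper_env k \<rho> \<epsilon> u y = u x - (norm (x - y))\<^sup>2 / \<epsilon>"
proof -
  let ?s = "upper_env k \<rho> \<epsilon> u y"
  have "\<forall>n. \<exists>x. x \<in> cball 0 \<rho> \<and> x $ k = y $ k \<and> ?s - 1 / (real n + 1) < u x - (norm (x - y))\<^sup>2 / \<epsilon>"
    using env_approx[OF assms] by simp
  then obtain X where X: "\<And>n. X n \<in> cball 0 \<rho>" "\<And>n. X n $ k = y $ k"
    "\<And>n. ?s - 1 / (real n + 1) < u (X n) - (norm (X n - y))\<^sup>2 / \<epsilon>"
    by metis
  obtain l r where l: "l \<in> cball 0 \<rho>" "strict_mono r" "(X \<circ> r) \<longlonglongrightarrow> l"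
    using compact_imp_seq_compact[OF compact_cball] X(1) unfolding seq_compact_def by metis
  have "((\<lambda>n. (X \<circ> r) n $ k) \<longlonglongrightarrow> l $ k)" using l(3) by (rule tendsto_vec_nth)
  then have lk: "l $ k = y $ k" using X(2) by (simp add: o_def LIMSEQ_const_iff)
  have A': "(\<lambda>n. ?s - 1 / (real n + 1)) \<longlonglongrightarrow> ?s"
  proof -
    have "(\<lambda>n. 1 / (real n + 1)) \<longlonglongrightarrow> 0"
      using LIMSEQ_inverse_real_of_nat by (simp add: inverse_eq_divide add.commute)
    then show ?thesis using tendsto_diff[OF tendsto_const, of _ 0 sequentially ?s] by simp
  qed
  have "?s \<le> u l - (norm (l - y))\<^sup>2 / \<epsilon>"
  proof (rule usc_lim[OF cb_sub[OF l(1)] _ l(3) tendsto_const A'])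
    fix n
    have "real n \<le> real (r n)" using seq_suble[OF l(2)] by simp
    then have "1 / (real (r n) + 1) \<le> 1 / (real n + 1)" by (simp add: frac_le)
    then show "?s - 1 / (real n + 1) \<le> u ((X \<circ> r) n) - (norm ((X \<circ> r) n - y))\<^sup>2 / \<epsilon>"
      using X(3)[of "r n"] by simp
  qed (use X(1) cb_sub in auto)
  moreover have "u l - (norm (l - y))\<^sup>2 / \<epsilon> \<le> ?s" using env_ge[OF l(1) lk] .
  ultimately show ?thesis using l(1) lk by (intro exI[of _ l]) auto
qed

lemma env_usc: assumes "r \<le> \<rho>" shows "usc_on (ball 0 r) (upper_env k \<rho> \<epsilon> u)"
  unfolding usc_on_def
proof (intro ballI allI impI, rule ccontr)
  let ?U = "upper_env k \<rho> \<epsilon> u"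
  fix y e assume y: "y \<in> ball (0::real^'n) r" and e: "0 < (e::real)"
    and ne: "\<not> (\<exists>d>0. \<forall>z\<in>ball 0 r. dist z y < d \<longrightarrow> ?U z < ?U y + e)"
  have "\<forall>n. \<exists>z. z \<in> ball 0 r \<and> dist z y < 1 / (real n + 1) \<and> ?U y + e \<le> ?U z"
  proof
    fix n
    have "(0::real) < 1 / (real n + 1)" by simp
    then show "\<exists>z. z \<in> ball 0 r \<and> dist z y < 1 / (real n + 1) \<and> ?U y + e \<le> ?U z"
    proof -
      from ne have "\<exists>z\<in>ball 0 r. dist z y < 1 / (real n + 1) \<and> \<not> ?U z < ?U y + e"
        using \<open>(0::real) < 1 / (real n + 1)\<close> by blast
      then show ?thesis by (auto simp: not_less)
    qed
  qed
  then obtain Z where Z: "\<And>n. Z n \<in> ball 0 r" "\<And>n. dist (Z n) y < 1 / (real n + 1)"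
    "\<And>n. ?U y + e \<le> ?U (Z n)" by metis
  have Zc: "\<And>n. Z n \<in> cball 0 \<rho>" 
  proof -
    fix n have "norm (Z n) < r" using Z(1)[of n] by simp
    then show "Z n \<in> cball 0 \<rho>" using assms by simp
  qed
  have "\<forall>n. \<exists>x. x \<in> cball 0 \<rho> \<and> x $ k = Z n $ k \<and> ?U (Z n) - e/2 < u x - (norm (x - Z n))\<^sup>2 / \<epsilon>"
    using env_approx[OF Zc] e by simp
  then obtain X where X: "\<And>n. X n \<in> cball 0 \<rho>" "\<And>n. X n $ k = Z n $ k"
    "\<And>n. ?U (Z n) - e/2 < u (X n) - (norm (X n - Z n))\<^sup>2 / \<epsilon>" by metis
  obtain l q where l: "l \<in> cball 0 \<rho>" "strict_mono q" "(X \<circ> q) \<longlonglongrightarrow> l"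
    using compact_imp_seq_compact[OF compact_cball] X(1) unfolding seq_compact_def by metis
  have Zlim: "Z \<longlonglongrightarrow> y"
  proof -
    have "(\<lambda>n. 1 / (real n + 1)) \<longlonglongrightarrow> 0"
      using LIMSEQ_inverse_real_of_nat by (simp add: inverse_eq_divide add.commute)
    moreover have "eventually (\<lambda>n. 0 \<le> dist (Z n) y) sequentially" by simp
    moreover have "eventually (\<lambda>n. dist (Z n) y \<le> 1 / (real n + 1)) sequentially"
      by (rule always_eventually) (meson Z(2) less_imp_le)
    ultimately have "(\<lambda>n. dist (Z n) y) \<longlonglongrightarrow> 0"
      using tendsto_sandwich[of "\<lambda>n. 0" "\<lambda>n. dist (Z n) y" sequentially "\<lambda>n. 1 / (real n + 1)" 0]
      by simp
    then show ?thesis by (rule tendsto_dist_iff[THEN iffD2])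
  qed
  then have Zq: "(Z \<circ> q) \<longlonglongrightarrow> y" using l(2) by (rule LIMSEQ_subseq_LIMSEQ)
  have "((\<lambda>n. (X \<circ> q) n $ k) \<longlonglongrightarrow> l $ k)" using l(3) by (rule tendsto_vec_nth)
  moreover have "((\<lambda>n. (Z \<circ> q) n $ k) \<longlonglongrightarrow> y $ k)" using Zq by (rule tendsto_vec_nth)
  moreover have "(\<lambda>n. (X \<circ> q) n $ k) = (\<lambda>n. (Z \<circ> q) n $ k)" using X(2) by simp
  ultimately have lk: "l $ k = y $ k" using LIMSEQ_unique by metis
  have "?U y + e / 2 \<le> u l - (norm (l - y))\<^sup>2 / \<epsilon>"
  proof (rule usc_lim[OF cb_sub[OF l(1)] _ l(3) Zq tendsto_const])
    fix n
    show "?U y + e / 2 \<le> u ((X \<circ> q) n) - (norm ((X \<circ> q) n - (Z \<circ> q) n))\<^sup>2 / \<epsilon>"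
      using X(3)[of "q n"] Z(3)[of "q n"] by simp
  qed (use X(1) cb_sub in auto)
  moreover have "u l - (norm (l - y))\<^sup>2 / \<epsilon> \<le> ?U y" using env_ge[OF l(1) lk] .
  ultimately show False using e by simp
qed

lemma touch_shift:
  assumes r: "r \<le> \<rho> - sqrt (2 * \<epsilon> * M)" and x0: "x0 \<in> ball 0 r"
    and t: "touches_above (ball 0 r) (upper_env k \<rho> \<epsilon> u) \<phi> x0"
  shows "\<exists>h. h $ k = 0 \<and> norm h \<le> sqrt (2 * \<epsilon> * M) \<and> x0 + h \<in> ball 0 1 \<and>
     touches_above (ball 0 1) u (\<lambda>x. \<phi> (x - h) + (norm h)\<^sup>2 / \<epsilon>) (x0 + h)"
proof -
  let ?U = "upper_env k \<rho> \<epsilon> u"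
  let ?R = "sqrt (2 * \<epsilon> * M)"
  have M0: "0 \<le> M" using bnd[of 0] by simp
  have R0: "0 \<le> ?R" using M0 eps by simp
  have nx0: "norm x0 < r" using x0 by simp
  have x0c: "x0 \<in> cball 0 \<rho>" using nx0 r R0 by (simp del: real_sqrt_ge_0_iff)
  obtain xs where xs: "xs \<in> cball 0 \<rho>" "xs $ k = x0 $ k" "?U x0 = u xs - (norm (xs - x0))\<^sup>2 / \<epsilon>"
    using env_max[OF x0c] by blast
  define h where "h = xs - x0"
  have hk: "h $ k = 0" using xs(2) by (simp add: h_def)
  have "u x0 - (norm (x0 - x0))\<^sup>2 / \<epsilon> \<le> ?U x0" by (rule env_ge[OF x0c refl])
  then have "(norm h)\<^sup>2 / \<epsilon> \<le> u xs - u x0" using xs(3) by (simp add: h_def)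
  also have "\<dots> \<le> 2 * M" using bnd[OF cb_sub[OF xs(1)]] bnd[OF cb_sub[OF x0c]] by linarith
  finally have "(norm h)\<^sup>2 \<le> 2 * \<epsilon> * M" using eps by (simp add: divide_le_eq mult.commute mult.left_commute)
  then have hR: "norm h \<le> ?R" using eps by (simp add: real_le_rsqrt M0)
  have xsh: "xs = x0 + h" by (simp add: h_def)
  have nxs: "norm xs < \<rho>"
  proof -
    have "norm xs \<le> norm x0 + norm h" unfolding xsh by (rule norm_triangle_ineq)
    then show ?thesis using nx0 hR r by linarith
  qed
  obtain d where d: "d > 0" "\<And>x. x \<in> ball 0 r \<inter> ball x0 d \<Longrightarrow> ?U x \<le> \<phi> x" and ph: "\<phi> x0 = ?U x0"
    using t unfolding touches_above_def by blast
  define d' where "d' = min d (min (r - norm x0) (\<rho> - norm xs))"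
  have d'0: "d' > 0" using d(1) nx0 nxs by (simp add: d'_def)
  show ?thesis
  proof (intro exI[of _ h] conjI hk hR)
    show "x0 + h \<in> ball 0 1" using cb_sub[OF xs(1)] xsh by simp
    show "touches_above (ball 0 1) u (\<lambda>x. \<phi> (x - h) + (norm h)\<^sup>2 / \<epsilon>) (x0 + h)"
      unfolding touches_above_def
    proof (intro conjI exI[of _ d'] d'0 ballI)
      show "\<phi> (x0 + h - h) + (norm h)\<^sup>2 / \<epsilon> = u (x0 + h)"
        using ph xs(3) by (simp add: h_def)
      fix x assume "x \<in> ball 0 1 \<inter> ball (x0 + h) d'"
      then have dx: "norm (x - xs) < d'" by (simp add: xsh dist_norm norm_minus_commute)
      have "norm (x - h) \<le> norm (x - xs) + norm x0"
        using norm_triangle_ineq[of "x - xs" x0] by (simp add: xsh algebra_simps)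
      then have a1: "x - h \<in> ball 0 r" using dx by (simp add: d'_def)
      have "dist x0 (x - h) = norm (x - xs)" by (simp add: xsh dist_norm algebra_simps norm_minus_commute)
      then have a2: "x - h \<in> ball x0 d" using dx by (simp add: d'_def)
      have "norm x \<le> norm (x - xs) + norm xs" using norm_triangle_ineq[of "x - xs" xs] by simp
      then have xc: "x \<in> cball 0 \<rho>" using dx by (simp add: d'_def)
      have "u x - (norm (x - (x - h)))\<^sup>2 / \<epsilon> \<le> ?U (x - h)"
        by (rule env_ge[OF xc]) (simp add: hk)
      also have "\<dots> \<le> \<phi> (x - h)" using d(2) a1 a2 by blast
      finally show "u x \<le> \<phi> (x - h) + (norm h)\<^sup>2 / \<epsilon>" by simp
    qed
  qed
qed

end


lemma modc_ge:
  fixes f :: "real^'n \<Rightarrow> real"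
  assumes "uniformly_continuous_on S f" "S \<subseteq> ball 0 1" "x \<in> S" "y \<in> S" "dist x y \<le> t"
  shows "\<bar>f x - f y\<bar> \<le> modc S f t"
proof -
  have "bounded S" using assms(2) bounded_subset by blast
  then have "bounded (f ` S)" using bounded_uniformly_continuous_image assms(1) by blast
  then obtain B where B: "\<And>z. z \<in> S \<Longrightarrow> \<bar>f z\<bar> \<le> B" unfolding bounded_real by blast
  have "bdd_above {\<bar>f x - f y\<bar> | x y. x \<in> S \<and> y \<in> S \<and> dist x y \<le> t}"
    unfolding bdd_above_def
  proof (intro exI[of _ "2 * B"] ballI)
    fix v assume "v \<in> {\<bar>f x - f y\<bar> | x y. x \<in> S \<and> y \<in> S \<and> dist x y \<le> t}"
    then obtain a b where "a \<in> S" "b \<in> S" "v = \<bar>f a - f b\<bar>" by blast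
    then show "v \<le> 2 * B" using B[of a] B[of b] by linarith
  qed
  then show ?thesis unfolding modc_def by (rule cSup_upper[rotated]) (use assms in blast)
qed

lemma shift_set:
  fixes h :: "real^'n"
  assumes "h $ k = 0"
  shows "(+) h ` (ball x0 \<delta> \<inter> {x. P (x $ k)}) = ball (x0 + h) \<delta> \<inter> {x. P (x $ k)}"
proof -
  have "(+) h ` (ball x0 \<delta> \<inter> {x. P (x $ k)}) = (+) h ` ball x0 \<delta> \<inter> (+) h ` {x. P (x $ k)}"
    by (rule image_Int) (simp add: inj_on_def)
  moreover have "(+) h ` ball x0 \<delta> = ball (x0 + h) \<delta>" using ball_translation[of h x0 \<delta>] by (simp add: add.commute)
  moreover have "(+) h ` {x. P (x $ k)} = {x. P (x $ k)}"
  proof (intro equalityI subsetI)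
    fix x assume "x \<in> (+) h ` {x. P (x $ k)}" then show "x \<in> {x. P (x $ k)}" using assms by auto
  next
    fix x assume "x \<in> {x. P (x $ k)}"
    then show "x \<in> (+) h ` {x. P (x $ k)}" using assms by (intro image_eqI[of _ _ "x - h"]) auto
  qed
  ultimately show ?thesis by simp
qed

lemma closure_shift:
  fixes h :: "real^'n"
  assumes "h $ k = 0"
  shows "closure (ball (x0 + h) \<delta> \<inter> {x. P (x $ k)}) = (+) h ` closure (ball x0 \<delta> \<inter> {x. P (x $ k)})"
  using closure_translation[of h "ball x0 \<delta> \<inter> {x. P (x $ k)}"] shift_set[OF assms] by simp

lemma mem_shift: "(x::'a::ab_group_add) \<in> (+) h ` U \<longleftrightarrow> x - h \<in> U"
  by (auto intro: image_eqI[of _ _ "x - h"])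

theorem mainTheorem11:
  fixes k :: "'n::finite" and lam Lam \<rho> :: real
    and Fp Fm :: "real^'n^'n \<Rightarrow> real"
    and fp fm g u :: "real^'n \<Rightarrow> real"
  assumes "ellip_class lam Lam Fp" and "ellip_class lam Lam Fm"
    and "uniformly_continuous_on (ball 0 1 \<inter> {x. 0 < x $ k}) fp"
    and "uniformly_continuous_on (ball 0 1 \<inter> {x. x $ k < 0}) fm"
    and "uniformly_continuous_on (ball 0 1 \<inter> {x. x $ k = 0}) g"
    and "bounded (u ` ball 0 1)"
    and "visc_sub k 1 Fp Fm fp fm g u"
    and "0 < \<rho>" and "\<rho> < 1"
  shows "\<exists>\<epsilon>0>0. \<forall>\<epsilon>. 0 < \<epsilon> \<and> \<epsilon> < \<epsilon>0 \<longrightarrow>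
           (let r\<epsilon> = sqrt (2 * \<epsilon> * sup_norm_B1 u) in
            \<forall>r. r \<le> \<rho> - r\<epsilon> \<longrightarrow>
              visc_sub k r Fp Fm
                (\<lambda>x. fp x - modc (ball 0 1 \<inter> {x. 0 < x $ k}) fp r\<epsilon>)
                (\<lambda>x. fm x - modc (ball 0 1 \<inter> {x. x $ k < 0}) fm r\<epsilon>)
                (\<lambda>x. g x - modc (ball 0 1 \<inter> {x. x $ k = 0}) g r\<epsilon>)
                (upper_env k \<rho> \<epsilon> u))"
proof (intro exI[of _ 1] conjI allI impI zero_less_one)
  fix \<epsilon> :: real assume "0 < \<epsilon> \<and> \<epsilon> < 1"
  then have eps: "0 < \<epsilon>" by simp
  define M where "M = sup_norm_B1 u"
  obtain B where B: "\<And>x. x \<in> ball 0 1 \<Longrightarrow> \<bar>u x\<bar> \<le> B"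
    using assms(6) unfolding bounded_real by blast
  have bnd: "\<And>x. x \<in> ball 0 1 \<Longrightarrow> \<bar>u x\<bar> \<le> M"
    unfolding M_def sup_norm_B1_def
    by (rule cSup_upper) (use B in \<open>auto simp: bdd_above_def intro!: exI[of _ B]\<close>)
  have V: "visc_sub k 1 Fp Fm fp fm g u" by fact
  have usc: "usc_on (ball 0 1) u" using V unfolding visc_sub_def by blast
  note ctx = touch_shift[of u M \<rho> \<epsilon>, OF usc bnd assms(8) assms(9) eps]
  let ?R = "sqrt (2 * \<epsilon> * M)"
  have M0: "0 \<le> M" using bnd[of 0] by simp
  have R0: "0 \<le> ?R" using M0 eps by simp
  show "let r\<epsilon> = sqrt (2 * \<epsilon> * sup_norm_B1 u) in
            \<forall>r. r \<le> \<rho> - r\<epsilon> \<longrightarrow>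
              visc_sub k r Fp Fm
                (\<lambda>x. fp x - modc (ball 0 1 \<inter> {x. 0 < x $ k}) fp r\<epsilon>)
                (\<lambda>x. fm x - modc (ball 0 1 \<inter> {x. x $ k < 0}) fm r\<epsilon>)
                (\<lambda>x. g x - modc (ball 0 1 \<inter> {x. x $ k = 0}) g r\<epsilon>)
                (upper_env k \<rho> \<epsilon> u)"
    unfolding Let_def M_def[symmetric]
  proof (intro allI impI)
    fix r assume r: "r \<le> \<rho> - ?R"
    have rr: "r \<le> \<rho>" using r R0 by linarith
    have inB: "\<And>x. x \<in> ball 0 r \<Longrightarrow> x \<in> ball (0::real^'n) 1"
      using rr assms(9) by auto
    show "visc_sub k r Fp Fm
                (\<lambda>x. fp x - modc (ball 0 1 \<inter> {x. 0 < x $ k}) fp ?R)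
                (\<lambda>x. fm x - modc (ball 0 1 \<inter> {x. x $ k < 0}) fm ?R)
                (\<lambda>x. g x - modc (ball 0 1 \<inter> {x. x $ k = 0}) g ?R)
                (upper_env k \<rho> \<epsilon> u)"
      unfolding visc_sub_def
    proof (intro conjI allI impI)
      show "usc_on (ball 0 r) (upper_env k \<rho> \<epsilon> u)"
        by (rule env_usc[OF usc bnd assms(8,9) eps rr])
    next
      fix x0 \<phi>
      assume a: "x0 \<in> ball 0 r \<and> 0 < x0 $ k \<and> touches_above (ball 0 r) (upper_env k \<rho> \<epsilon> u) \<phi> x0 \<and>
          (\<exists>d>0. C2_on (ball x0 d) \<phi>)"
      then obtain d where d: "d > 0" "C2_on (ball x0 d) \<phi>" by blast
      obtain h where h: "h $ k = 0" "norm h \<le> ?R" "x0 + h \<in> ball 0 1"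
        "touches_above (ball 0 1) u (\<lambda>x. \<phi> (x - h) + (norm h)\<^sup>2 / \<epsilon>) (x0 + h)"
        using ctx[OF _ r] a by blast
      have "C2_on (ball (x0 + h) d) (\<lambda>x. \<phi> (x - h) + (norm h)\<^sup>2 / \<epsilon>)"
        by (rule C2_shift[OF d(2)]) (auto simp: dist_norm algebra_simps)
      moreover have "0 < (x0 + h) $ k" using a h by simp
      moreover have "\<forall>x0 \<phi>. x0 \<in> ball 0 1 \<and> 0 < x0 $ k \<and> touches_above (ball 0 1) u \<phi> x0 \<and>
          (\<exists>d>0. C2_on (ball x0 d) \<phi>) \<longrightarrow> fp x0 \<le> Fp (hess \<phi> x0)"
        using V unfolding visc_sub_def by blast
      ultimately have "fp (x0 + h) \<le> Fp (hess (\<lambda>x. \<phi> (x - h) + (norm h)\<^sup>2 / \<epsilon>) (x0 + h))"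
        using h(3,4) d(1) by blast
      then have 1: "fp (x0 + h) \<le> Fp (hess \<phi> x0)" by (simp add: hess_shift)
      have "\<bar>fp x0 - fp (x0 + h)\<bar> \<le> modc (ball 0 1 \<inter> {x. 0 < x $ k}) fp ?R"
        by (rule modc_ge[OF assms(3)]) (use a h inB in \<open>auto simp: dist_norm\<close>)
      then show "fp x0 - modc (ball 0 1 \<inter> {x. 0 < x $ k}) fp ?R \<le> Fp (hess \<phi> x0)"
        using 1 by linarith
    next
      fix x0 \<phi>
      assume a: "x0 \<in> ball 0 r \<and> x0 $ k < 0 \<and> touches_above (ball 0 r) (upper_env k \<rho> \<epsilon> u) \<phi> x0 \<and>
          (\<exists>d>0. C2_on (ball x0 d) \<phi>)"
      then obtain d where d: "d > 0" "C2_on (ball x0 d) \<phi>" by blast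
      obtain h where h: "h $ k = 0" "norm h \<le> ?R" "x0 + h \<in> ball 0 1"
        "touches_above (ball 0 1) u (\<lambda>x. \<phi> (x - h) + (norm h)\<^sup>2 / \<epsilon>) (x0 + h)"
        using ctx[OF _ r] a by blast
      have "C2_on (ball (x0 + h) d) (\<lambda>x. \<phi> (x - h) + (norm h)\<^sup>2 / \<epsilon>)"
        by (rule C2_shift[OF d(2)]) (auto simp: dist_norm algebra_simps)
      moreover have "(x0 + h) $ k < 0" using a h by simp
      moreover have "\<forall>x0 \<phi>. x0 \<in> ball 0 1 \<and> x0 $ k < 0 \<and> touches_above (ball 0 1) u \<phi> x0 \<and>
          (\<exists>d>0. C2_on (ball x0 d) \<phi>) \<longrightarrow> fm x0 \<le> Fm (hess \<phi> x0)"
        using V unfolding visc_sub_def by blast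
      ultimately have "fm (x0 + h) \<le> Fm (hess (\<lambda>x. \<phi> (x - h) + (norm h)\<^sup>2 / \<epsilon>) (x0 + h))"
        using h(3,4) d(1) by blast
      then have 1: "fm (x0 + h) \<le> Fm (hess \<phi> x0)" by (simp add: hess_shift)
      have "\<bar>fm x0 - fm (x0 + h)\<bar> \<le> modc (ball 0 1 \<inter> {x. x $ k < 0}) fm ?R"
        by (rule modc_ge[OF assms(4)]) (use a h inB in \<open>auto simp: dist_norm\<close>)
      then show "fm x0 - modc (ball 0 1 \<inter> {x. x $ k < 0}) fm ?R \<le> Fm (hess \<phi> x0)"
        using 1 by linarith
    next
      fix x0 \<phi> \<delta> \<psi>p \<psi>m Up Um
      assume a: "x0 \<in> ball 0 r \<and> x0 $ k = 0 \<and> touches_above (ball 0 r) (upper_env k \<rho> \<epsilon> u) \<phi> x0 \<and>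
          0 < \<delta> \<and> continuous_on (cball x0 \<delta>) \<phi> \<and>
          closure (ball x0 \<delta> \<inter> {x. 0 < x $ k}) \<subseteq> Up \<and> C2_on Up \<psi>p \<and>
          (\<forall>x\<in>closure (ball x0 \<delta> \<inter> {x. 0 < x $ k}). \<psi>p x = \<phi> x) \<and>
          closure (ball x0 \<delta> \<inter> {x. x $ k < 0}) \<subseteq> Um \<and> C2_on Um \<psi>m \<and>
          (\<forall>x\<in>closure (ball x0 \<delta> \<inter> {x. x $ k < 0}). \<psi>m x = \<phi> x)"
      obtain h where h: "h $ k = 0" "norm h \<le> ?R" "x0 + h \<in> ball 0 1"
        "touches_above (ball 0 1) u (\<lambda>x. \<phi> (x - h) + (norm h)\<^sup>2 / \<epsilon>) (x0 + h)"
        using ctx[OF _ r] a by blast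
      define c where "c = (norm h)\<^sup>2 / \<epsilon>"
      have cont: "continuous_on (cball (x0 + h) \<delta>) (\<lambda>x. \<phi> (x - h) + c)"
      proof -
        have "continuous_on (cball (x0 + h) \<delta>) (\<lambda>x. \<phi> (x - h))"
          by (rule continuous_on_compose2[of "cball x0 \<delta>" \<phi>])
             (use a in \<open>auto intro!: continuous_intros simp: dist_norm algebra_simps\<close>)
        then show ?thesis by (auto intro!: continuous_intros)
      qed
      have clp: "closure (ball (x0 + h) \<delta> \<inter> {x. 0 < x $ k}) = (+) h ` closure (ball x0 \<delta> \<inter> {x. 0 < x $ k})"
        using closure_shift[OF h(1), of x0 \<delta> "\<lambda>t. 0 < t"] by simp
      have clm: "closure (ball (x0 + h) \<delta> \<inter> {x. x $ k < 0}) = (+) h ` closure (ball x0 \<delta> \<inter> {x. x $ k < 0})"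
        using closure_shift[OF h(1), of x0 \<delta> "\<lambda>t. t < 0"] by simp
      have C2p: "C2_on ((+) h ` Up) (\<lambda>x. \<psi>p (x - h) + c)"
      proof (rule C2_shift[of Up "\<psi>p" "(+) h ` Up" h c])
        show "C2_on Up \<psi>p" using a by blast
        then show "open ((+) h ` Up)" unfolding C2_on_def using open_translation by blast
      qed (simp add: mem_shift)
      have C2m: "C2_on ((+) h ` Um) (\<lambda>x. \<psi>m (x - h) + c)"
      proof (rule C2_shift[of Um "\<psi>m" "(+) h ` Um" h c])
        show "C2_on Um \<psi>m" using a by blast
        then show "open ((+) h ` Um)" unfolding C2_on_def using open_translation by blast
      qed (simp add: mem_shift)
      have "g (x0 + h) \<le> pderiv k (\<lambda>x. \<psi>p (x - h) + c) (x0 + h) - pderiv k (\<lambda>x. \<psi>m (x - h) + c) (x0 + h)"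
      proof -
        have "\<forall>x0 \<phi> \<delta> \<psi>p \<psi>m Up Um. x0 \<in> ball 0 1 \<and> x0 $ k = 0 \<and> touches_above (ball 0 1) u \<phi> x0 \<and>
          0 < \<delta> \<and> continuous_on (cball x0 \<delta>) \<phi> \<and>
          closure (ball x0 \<delta> \<inter> {x. 0 < x $ k}) \<subseteq> Up \<and> C2_on Up \<psi>p \<and>
          (\<forall>x\<in>closure (ball x0 \<delta> \<inter> {x. 0 < x $ k}). \<psi>p x = \<phi> x) \<and>
          closure (ball x0 \<delta> \<inter> {x. x $ k < 0}) \<subseteq> Um \<and> C2_on Um \<psi>m \<and>
          (\<forall>x\<in>closure (ball x0 \<delta> \<inter> {x. x $ k < 0}). \<psi>m x = \<phi> x)
        \<longrightarrow> g x0 \<le> pderiv k \<psi>p x0 - pderiv k \<psi>m x0"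
          using V unfolding visc_sub_def by blast
        note all = this
        have pre: "x0 + h \<in> ball 0 1 \<and> (x0 + h) $ k = 0 \<and> touches_above (ball 0 1) u (\<lambda>x. \<phi> (x - h) + c) (x0 + h) \<and>
            0 < \<delta> \<and> continuous_on (cball (x0 + h) \<delta>) (\<lambda>x. \<phi> (x - h) + c) \<and>
            closure (ball (x0 + h) \<delta> \<inter> {x. 0 < x $ k}) \<subseteq> (+) h ` Up \<and> C2_on ((+) h ` Up) (\<lambda>x. \<psi>p (x - h) + c) \<and>
            (\<forall>x\<in>closure (ball (x0 + h) \<delta> \<inter> {x. 0 < x $ k}). \<psi>p (x - h) + c = \<phi> (x - h) + c) \<and>
            closure (ball (x0 + h) \<delta> \<inter> {x. x $ k < 0}) \<subseteq> (+) h ` Um \<and> C2_on ((+) h ` Um) (\<lambda>x. \<psi>m (x - h) + c) \<and>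
            (\<forall>x\<in>closure (ball (x0 + h) \<delta> \<inter> {x. x $ k < 0}). \<psi>m (x - h) + c = \<phi> (x - h) + c)"
          unfolding clp clm c_def using a h cont C2p C2m unfolding c_def by auto
        show ?thesis
          using all[rule_format, of "x0 + h" "\<lambda>x. \<phi> (x - h) + c" \<delta> "(+) h ` Up" "\<lambda>x. \<psi>p (x - h) + c"
              "(+) h ` Um" "\<lambda>x. \<psi>m (x - h) + c"] pre by blast
      qed
      then have 1: "g (x0 + h) \<le> pderiv k \<psi>p x0 - pderiv k \<psi>m x0" by (simp add: pderiv_shift)
      have "\<bar>g x0 - g (x0 + h)\<bar> \<le> modc (ball 0 1 \<inter> {x. x $ k = 0}) g ?R"
        by (rule modc_ge[OF assms(5)]) (use a h inB in \<open>auto simp: dist_norm\<close>)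
      then show "g x0 - modc (ball 0 1 \<inter> {x. x $ k = 0}) g ?R \<le> pderiv k \<psi>p x0 - pderiv k \<psi>m x0"
        using 1 by linarith
    qed
  qed
qed

end
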